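(* Let $\ell$ be a positive integer. Construct $\mathcal C^*\subseteq\mathcal C$ and the sets $\mathcal U_v$ ($v\in\mathcal C^*$) as described in the context. Then: (C1) for all distinct $v,v'\in\mathcal C^*$, $d(v,v')>2\ell\max\{d_{av}(v),d_{av}(v')\}$; (C2) for every $j\in\mathcal C$ there is $v\in\mathcal C^*$ with $d_{av}(v)\le d_{av}(j)$ and $d(v,j)\le2\ell d_{av}(j)$; (C3) $\sum_{i\in\mathcal U_v}y_i\ge1-1/\ell$ for every $v\in\mathcal C^*$; (C4) for every $v\in\mathcal C^*$, $i\in\mathcal U_v$ and $j\in\mathcal C$, $d(i,v)\le d(i,j)+2\ell d_{av}(j)$.
   Context: Setting: finite sets $\mathcal F$ (facility locations) and $\mathcal C$ (clients), a metric $d$ on $\mathcal F\cup\mathcal C$, positive integers $k,u$, and real numbers $x_{i,j}\ge0$, $y_i\ge0$ ($i\in\mathcal F$, $j\in\mathcal C$) with $\sum_{i\in\mathcal F}x_{i,j}=1$ for all $j$, $\sum_i y_i\le k$, $x_{i,j}\le y_i$ for all $i,j$, and $\sum_{j}x_{i,j}\le u y_i$ for all $i$. Let $d_{av}(j)=\sum_{i\in\mathcal F}x_{i,j}d(i,j)$. Construction of $\mathcal C^*$: start with $\mathcal C^*=\emptyset$ and $R=\mathcal C$; while $R\neq\emptyset$, choose $v\in R$ with smallest $d_{av}(v)$, add $v$ to $\mathcal C^*$, and remove from $R$ all $j\in R$ with $d(j,v)\le2\ell d_{av}(j)$ (this includes $v$). Then each location $i\in\mathcal F$ is put into $\mathcal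 U_v$ for one $v\in\mathcal C^*$ closest to $i$ (ties broken arbitrarily), so $\{\mathcal U_v\}_{v\in\mathcal C^*}$ partitions $\mathcal F$. *)

theory Defs
  imports Complex_Main
begin

definition d_av :: "('a \<Rightarrow> 'a \<Rightarrow> real) \<Rightarrow> 'a set \<Rightarrow> ('a \<Rightarrow> 'a \<Rightarrow> real) \<Rightarrow> 'a \<Rightarrow> real" where
  "d_av d F x j = (\<Sum>i\<in>F. x i j * d i j)"

text \<open>One step of the greedy construction of C*: state (S, R) = (current C*, remaining clients).
  Pick v in R of smallest dav, add it to S and remove from R every j with d j v \<le> 2 l dav j.\<close>
inductive greedy_step :: "('a \<Rightarrow> 'a \<Rightarrow> real) \<Rightarrow> ('a \<Rightarrow> real) \<Rightarrow> real \<Rightarrow>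
    ('a set \<times> 'a set) \<Rightarrow> ('a set \<times> 'a set) \<Rightarrow> bool"
  for d :: "'a \<Rightarrow> 'a \<Rightarrow> real" and dav :: "'a \<Rightarrow> real" and l :: real where
  "v \<in> R \<Longrightarrow> (\<forall>w\<in>R. dav v \<le> dav w) \<Longrightarrow>
   greedy_step d dav l (S, R) (insert v S, R - {j \<in> R. d j v \<le> 2 * l * dav j})"

definition greedy_result :: "('a \<Rightarrow> 'a \<Rightarrow> real) \<Rightarrow> ('a \<Rightarrow> real) \<Rightarrow> real \<Rightarrow> 'a set \<Rightarrow> 'a set \<Rightarrow> bool" where
  "greedy_result d dav l C Cs \<longleftrightarrow> (greedy_step d dav l)\<^sup>*\<^sup>* ({}, C) (Cs, {})"

end

theory Submission
  imports Defs
begin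

definition ginv :: "('a \<Rightarrow> 'a \<Rightarrow> real) \<Rightarrow> ('a \<Rightarrow> real) \<Rightarrow> real \<Rightarrow> 'a set \<Rightarrow> 'a set \<times> 'a set \<Rightarrow> bool" where
  "ginv d dav l C p \<longleftrightarrow> fst p \<subseteq> C \<and> snd p \<subseteq> C \<and> fst p \<inter> snd p = {} \<and>
     (\<forall>v\<in>fst p. \<forall>w\<in>fst p. v \<noteq> w \<longrightarrow> d v w > 2 * l * max (dav v) (dav w)) \<and>
     (\<forall>j\<in>C - snd p. \<exists>v\<in>fst p. dav v \<le> dav j \<and> d j v \<le> 2 * l * dav j) \<and>
     (\<forall>v\<in>fst p. \<forall>j\<in>snd p. dav v \<le> dav j \<and> d j v > 2 * l * dav j)"

lemma greedy_inv:
  assumes "(greedy_step d dav l)\<^sup>*\<^sup>* ({}, C) p"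
    and dz: "\<forall>p\<in>C. d p p = 0" and ds: "\<forall>p\<in>C. \<forall>q\<in>C. d p q = d q p"
    and dn: "\<forall>p\<in>C. dav p \<ge> 0" and lp: "l \<ge> 0"
  shows "ginv d dav l C p"
  using assms(1)
proof (induction rule: rtranclp_induct)
  case base
  then show ?case by (simp add: ginv_def)
next
  case (step q p)
  from step.hyps(2) show ?case
  proof cases
    case (1 v R S)
    have G: "ginv d dav l C (S, R)" using step.IH 1 by simp
    have I1: "S \<subseteq> C" and I2: "R \<subseteq> C" and I3: "S \<inter> R = {}"
      and I4: "\<forall>v\<in>S. \<forall>w\<in>S. v \<noteq> w \<longrightarrow> d v w > 2 * l * max (dav v) (dav w)"
      and I5: "\<forall>j\<in>C - R. \<exists>v\<in>S. dav v \<le> dav j \<and> d j v \<le> 2 * l * dav j"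
      and I6: "\<forall>v\<in>S. \<forall>j\<in>R. dav v \<le> dav j \<and> d j v > 2 * l * dav j"
      using G unfolding ginv_def by simp_all
    have vC: "v \<in> C" using 1 I2 by auto
    have vS: "v \<notin> S" using 1 I3 by auto
    have vrem: "d v v \<le> 2 * l * dav v" using dz dn lp vC by auto
    have c1: "S \<subseteq> C" using I1 by auto
      have c2: "R - {j \<in> R. d j v \<le> 2 * l * dav j} \<subseteq> C" using I2 by auto
      have c3: "insert v S \<inter> (R - {j \<in> R. d j v \<le> 2 * l * dav j}) = {}"
        using I3 vrem by auto
      have c4: "\<forall>v'\<in>insert v S. \<forall>w\<in>insert v S. v' \<noteq> w \<longrightarrow> 2 * l * max (dav v') (dav w) < d v' w"
      proof (intro ballI impI)
        fix a b assume a: "a \<in> insert v S" and b: "b \<in> insert v S" and ab: "a \<noteq> b"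
        show "2 * l * max (dav a) (dav b) < d a b"
        proof (cases "a = v")
          case True
          then have bS: "b \<in> S" using b ab by auto
          have "dav b \<le> dav v" "d v b > 2 * l * dav v" using I6 bS 1 by auto
          then show ?thesis using True by (simp add: max_def)
        next
          case aF: False
          then have aS: "a \<in> S" using a by auto
          show ?thesis
          proof (cases "b = v")
            case True
            have "dav a \<le> dav v" "d v a > 2 * l * dav v" using I6 aS 1 by auto
            moreover have "d a v = d v a" using ds vC aS I1 by auto
            ultimately show ?thesis using True by (simp add: max_def)
          next
            case False
            then show ?thesis using I4 aS b ab by auto
          qed
        qed
      qed
      have c5: "\<forall>j\<in>C - (R - {j \<in> R. d j v \<le> 2 * l * dav j}). \<exists>v'\<in>insert v S. dav v' \<le> dav j \<and> d j v' \<le> 2 * l * dav j"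
      proof
        fix j assume j: "j \<in> C - (R - {j \<in> R. d j v \<le> 2 * l * dav j})"
        show "\<exists>v'\<in>insert v S. dav v' \<le> dav j \<and> d j v' \<le> 2 * l * dav j"
        proof (cases "j \<in> R")
          case True
          then show ?thesis using j 1 by auto
        next
          case False
          then show ?thesis using j I5 by blast
        qed
      qed
      have c6: "\<forall>j\<in>R - {j \<in> R. d j v \<le> 2 * l * dav j}. dav v \<le> dav j \<and> 2 * l * dav j < d j v"
        using 1 by auto
      have c7: "\<forall>w\<in>S. \<forall>j\<in>R - {j \<in> R. d j v \<le> 2 * l * dav j}. dav w \<le> dav j \<and> 2 * l * dav j < d j w"
        using I6 by auto
      have c8: "\<forall>w\<in>insert v S. \<forall>j\<in>R - {j \<in> R. d j v \<le> 2 * l * dav j}. dav w \<le> dav j \<and> 2 * l * dav j < d j w"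
        using c6 c7 by (simp only: ball_simps)
      have c0: "insert v S \<subseteq> C" using vC c1 by simp
      show ?thesis unfolding 1 ginv_def fst_conv snd_conv
        by (intro conjI c0 c2 c3 c4 c5 c8)
  qed
qed

theorem claim2:
  fixes F C :: "'a set" and d :: "'a \<Rightarrow> 'a \<Rightarrow> real"
    and k u l :: nat and x :: "'a \<Rightarrow> 'a \<Rightarrow> real" and y :: "'a \<Rightarrow> real"
    and Cs :: "'a set" and \<sigma> :: "'a \<Rightarrow> 'a"
  assumes finF: "finite F" and finC: "finite C"
    and d_zero: "\<forall>p\<in>F \<union> C. d p p = 0"
    and d_pos: "\<forall>p\<in>F \<union> C. \<forall>q\<in>F \<union> C. p \<noteq> q \<longrightarrow> d p q > 0"
    and d_sym: "\<forall>p\<in>F \<union> C. \<forall>q\<in>F \<union> C. d p q = d q p"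
    and d_tri: "\<forall>p\<in>F \<union> C. \<forall>q\<in>F \<union> C. \<forall>r\<in>F \<union> C. d p r \<le> d p q + d q r"
    and k_pos: "k > 0" and u_pos: "u > 0"
    and x_nonneg: "\<forall>i\<in>F. \<forall>j\<in>C. x i j \<ge> 0"
    and y_nonneg: "\<forall>i\<in>F. y i \<ge> 0"
    and x_sum: "\<forall>j\<in>C. (\<Sum>i\<in>F. x i j) = 1"
    and y_sum: "(\<Sum>i\<in>F. y i) \<le> real k"
    and x_le_y: "\<forall>i\<in>F. \<forall>j\<in>C. x i j \<le> y i"
    and cap: "\<forall>i\<in>F. (\<Sum>j\<in>C. x i j) \<le> real u * y i"
    and l_pos: "l > 0"
    and greedy: "greedy_result d (d_av d F x) (real l) C Cs"
    and assign: "\<forall>i\<in>F. \<sigma> i \<in> Cs \<and> (\<forall>w\<in>Cs. d i (\<sigma> i) \<le> d i w)"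
  shows "(\<forall>v\<in>Cs. \<forall>v'\<in>Cs. v \<noteq> v' \<longrightarrow>
            d v v' > 2 * real l * max (d_av d F x v) (d_av d F x v'))
       \<and> (\<forall>j\<in>C. \<exists>v\<in>Cs. d_av d F x v \<le> d_av d F x j \<and> d v j \<le> 2 * real l * d_av d F x j)
       \<and> (\<forall>v\<in>Cs. (\<Sum>i\<in>{i\<in>F. \<sigma> i = v}. y i) \<ge> 1 - 1 / real l)
       \<and> (\<forall>v\<in>Cs. \<forall>i\<in>{i\<in>F. \<sigma> i = v}. \<forall>j\<in>C.
            d i v \<le> d i j + 2 * real l * d_av d F x j)"
proof -
  define dav where "dav = d_av d F x"
  have dge: "d p q \<ge> 0" if "p \<in> F \<union> C" "q \<in> F \<union> C" for p q
    using d_zero d_pos that by (cases "p = q") (auto intro: less_imp_le)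
  have davnn: "\<forall>j\<in>C. dav j \<ge> 0"
    unfolding dav_def d_av_def using x_nonneg dge by (auto intro!: sum_nonneg)
  have G: "ginv d dav (real l) C (Cs, {})"
    apply (rule greedy_inv)
    using greedy d_zero d_sym davnn unfolding greedy_result_def dav_def by auto
  have CsC: "Cs \<subseteq> C"
    and P4: "\<forall>v\<in>Cs. \<forall>w\<in>Cs. v \<noteq> w \<longrightarrow> d v w > 2 * real l * max (dav v) (dav w)"
    and P5: "\<forall>j\<in>C. \<exists>v\<in>Cs. dav v \<le> dav j \<and> d j v \<le> 2 * real l * dav j"
    using G unfolding ginv_def by simp_all
  have C2: "\<forall>j\<in>C. \<exists>v\<in>Cs. dav v \<le> dav j \<and> d v j \<le> 2 * real l * dav j"
  proof
    fix j assume j: "j \<in> C"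
    then obtain v where v: "v \<in> Cs" "dav v \<le> dav j" "d j v \<le> 2 * real l * dav j"
      using P5 by blast
    have "d v j = d j v" using d_sym v(1) CsC j by auto
    then show "\<exists>v\<in>Cs. dav v \<le> dav j \<and> d v j \<le> 2 * real l * dav j" using v by auto
  qed
  have C4: "\<forall>v\<in>Cs. \<forall>i\<in>{i\<in>F. \<sigma> i = v}. \<forall>j\<in>C. d i v \<le> d i j + 2 * real l * dav j"
  proof (intro ballI)
    fix v i j assume v: "v \<in> Cs" and i: "i \<in> {i\<in>F. \<sigma> i = v}" and j: "j \<in> C"
    obtain w where w: "w \<in> Cs" "d j w \<le> 2 * real l * dav j"
      using P5 j by blast
    have iF: "i \<in> F" and si: "\<sigma> i = v" using i by auto
    have "d i v \<le> d i w" using assign iF si w(1) by auto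
    also have "\<dots> \<le> d i j + d j w" using d_tri iF j w(1) CsC by blast
    finally show "d i v \<le> d i j + 2 * real l * dav j" using w(2) by linarith
  qed
  have C3: "\<forall>v\<in>Cs. (\<Sum>i\<in>{i\<in>F. \<sigma> i = v}. y i) \<ge> 1 - 1 / real l"
  proof
    fix v assume v: "v \<in> Cs"
    have vC: "v \<in> C" using v CsC by auto
    define B where "B = {i\<in>F. d i v \<le> real l * dav v}"
    have BF: "B \<subseteq> F" unfolding B_def by auto
    have BU: "B \<subseteq> {i\<in>F. \<sigma> i = v}"
    proof
      fix i assume iB: "i \<in> B"
      have iF: "i \<in> F" and dil: "d i v \<le> real l * dav v" using iB B_def by auto
      have "\<sigma> i = v"
      proof (rule ccontr)
        assume ne: "\<sigma> i \<noteq> v"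
        have s: "\<sigma> i \<in> Cs" using assign iF by auto
        have sC: "\<sigma> i \<in> C" using s CsC by auto
        have "d v (\<sigma> i) > 2 * real l * max (dav v) (dav (\<sigma> i))" using P4 v s ne by auto
        hence h1: "d v (\<sigma> i) > 2 * real l * dav v"
          by (smt (verit) l_pos max.cobounded1 mult_left_mono of_nat_0_le_iff)
        have "d v (\<sigma> i) \<le> d v i + d i (\<sigma> i)" using d_tri vC iF sC by blast
        moreover have "d v i = d i v" using d_sym vC iF by auto
        moreover have "d i (\<sigma> i) \<le> d i v" using assign iF v by auto
        ultimately show False using h1 dil by linarith
      qed
      then show "i \<in> {i\<in>F. \<sigma> i = v}" using iF by auto
    qed
    have sumx: "(\<Sum>i\<in>F. x i v) = (\<Sum>i\<in>B. x i v) + (\<Sum>i\<in>F - B. x i v)"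
      using finF BF by (metis sum.subset_diff add.commute)
    have far: "(\<Sum>i\<in>F - B. x i v) \<le> 1 / real l"
    proof (cases "dav v = 0")
      case True
      have "(\<Sum>i\<in>F. x i v * d i v) = 0" using True unfolding dav_def d_av_def .
      hence z: "\<forall>i\<in>F. x i v * d i v = 0"
        using finF x_nonneg dge vC by (subst (asm) sum_nonneg_eq_0_iff) auto
      have "\<forall>i\<in>F - B. x i v = 0"
      proof
        fix i assume i: "i \<in> F - B"
        hence "d i v > 0" using True B_def by auto
        thus "x i v = 0" using z i by auto
      qed
      hence "(\<Sum>i\<in>F - B. x i v) = 0" by simp
      thus ?thesis by simp
    next
      case False
      hence dp: "dav v > 0" using davnn vC by auto
      have "(\<Sum>i\<in>F - B. x i v * (real l * dav v)) \<le> (\<Sum>i\<in>F - B. x i v * d i v)"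
        apply (rule sum_mono)
        using x_nonneg vC B_def by (auto intro!: mult_left_mono)
      also have "\<dots> \<le> (\<Sum>i\<in>F. x i v * d i v)"
        apply (rule sum_mono2)
        using finF x_nonneg dge vC by auto
      also have "\<dots> = dav v" unfolding dav_def d_av_def ..
      finally have "(\<Sum>i\<in>F - B. x i v) * (real l * dav v) \<le> 1 * dav v"
        by (simp add: sum_distrib_right)
      hence "(\<Sum>i\<in>F - B. x i v) * real l \<le> 1" using dp
        by (simp add: mult.assoc[symmetric])
      thus ?thesis using l_pos by (simp add: field_simps)
    qed
    have "1 - 1 / real l \<le> (\<Sum>i\<in>B. x i v)" using sumx far x_sum vC by auto
    also have "\<dots> \<le> (\<Sum>i\<in>B. y i)" using x_le_y BF vC by (auto intro!: sum_mono)
    also have "\<dots> \<le> (\<Sum>i\<in>{i\<in>F. \<sigma> i = v}. y i)"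
      apply (rule sum_mono2) using finF BU y_nonneg by auto
    finally show "(\<Sum>i\<in>{i\<in>F. \<sigma> i = v}. y i) \<ge> 1 - 1 / real l" .
  qed
  show ?thesis using P4 C2 C3 C4 unfolding dav_def by blast
qed

end
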